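(* Let $0<x_0\le1$ and $\epsilon\ge0$. Consider the eigenvalue problem $$L_0\Psi=\Phi,\qquad \Phi'+\frac{\epsilon}{1-x^2}\Phi=\mu\,\Psi',\qquad -x_0<x<x_0,$$ for $\Psi$ in the space $X_0$ if $x_0<1$ and in $X$ if $x_0=1$. Then every eigenvalue $\mu$ other than the trivial eigenvalue $\mu=0$ (whose eigenfunctions are the constants) is real and strictly negative.
   Context: $L_0=\frac{d}{dx}\left[(1-x^2)\frac{d}{dx}\right]$. ${\cal H}_0([-x_0,x_0])$ is the space of functions with $\int_{-x_0}^{x_0}(1-x^2)|\Psi'(x)|^2dx<\infty$. For $0<x_0<1$, $X_0=\{\Psi\in{\cal H}_0([-x_0,x_0]):\ \Psi'(\pm x_0)=0\}$; for $x_0=1$, $X=\{\Psi\in{\cal H}_0([-1,1]):\ \lim_{x\to\pm1}(1-x^2)\Psi'(x)=0\}$. $\Psi$ is determined up to an additive constant. A number $\mu\in\mathbb{C}$ is an eigenvalue if there is a nonzero $\Psi$ in the relevant space solving the system classically on $(-x_0,x_0)$ with $\Phi=L_0\Psi$. (This describes symmetry-preserving perturbations of a stationary flow on a sphere, $\epsilon$ being the Reynolds number.) *)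

theory Defs
  imports "HOL-Analysis.Analysis"
begin

text \<open>Psi : (-x0,x0) -> C, with derivative dPsi on the open interval.
  Phi = L0 Psi = d/dx[(1-x^2) Psi'] taken classically.\<close>

definition classical_eigen_solution ::
  "real \<Rightarrow> real \<Rightarrow> complex \<Rightarrow> (real \<Rightarrow> complex) \<Rightarrow> (real \<Rightarrow> complex) \<Rightarrow> bool" where
  "classical_eigen_solution x0 \<epsilon> \<mu> \<Psi> d\<Psi> \<longleftrightarrow>
     (\<exists>\<Phi> d\<Phi>. \<forall>x\<in>{-x0<..<x0}.
        (\<Psi> has_vector_derivative d\<Psi> x) (at x) \<and>
        ((\<lambda>t. complex_of_real (1 - t\<^sup>2) * d\<Psi> t) has_vector_derivative \<Phi> x) (at x) \<and>
        (\<Phi> has_vector_derivative d\<Phi> x) (at x) \<and>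
        d\<Phi> x + complex_of_real (\<epsilon> / (1 - x\<^sup>2)) * \<Phi> x = \<mu> * d\<Psi> x)"

definition in_H0 :: "real \<Rightarrow> (real \<Rightarrow> complex) \<Rightarrow> bool" where
  "in_H0 x0 d\<Psi> \<longleftrightarrow>
     set_integrable lborel {-x0<..<x0} (\<lambda>x. (1 - x\<^sup>2) * (cmod (d\<Psi> x))\<^sup>2)"

text \<open>Boundary conditions: X_0 (x0<1): Psi'(+-x0)=0, read as one-sided limits of Psi';
  X (x0=1): lim_{x->+-1} (1-x^2) Psi'(x) = 0.\<close>
definition boundary_cond :: "real \<Rightarrow> (real \<Rightarrow> complex) \<Rightarrow> bool" where
  "boundary_cond x0 d\<Psi> \<longleftrightarrow>
     (if x0 < 1 then (d\<Psi> \<longlongrightarrow> 0) (at_left x0) \<and> (d\<Psi> \<longlongrightarrow> 0) (at_right (-x0))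
      else ((\<lambda>x. complex_of_real (1 - x\<^sup>2) * d\<Psi> x) \<longlongrightarrow> 0) (at_left 1) \<and>
           ((\<lambda>x. complex_of_real (1 - x\<^sup>2) * d\<Psi> x) \<longlongrightarrow> 0) (at_right (-1)))"

definition is_eigenvalue :: "real \<Rightarrow> real \<Rightarrow> complex \<Rightarrow> bool" where
  "is_eigenvalue x0 \<epsilon> \<mu> \<longleftrightarrow>
     (\<exists>\<Psi> d\<Psi>. classical_eigen_solution x0 \<epsilon> \<mu> \<Psi> d\<Psi> \<and> in_H0 x0 d\<Psi> \<and>
        boundary_cond x0 d\<Psi> \<and> \<not> (\<exists>c. \<forall>x\<in>{-x0<..<x0}. \<Psi> x = c))"

end

theory Submission
  imports Defs
begin



definition pw :: "real \<Rightarrow> real \<Rightarrow> real" where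
  "pw e x = ((1+x)/(1-x)) powr (e/2)"

definition kw :: "real \<Rightarrow> real \<Rightarrow> real" where
  "kw e x = pw e x / (1 - x\<^sup>2)"

lemma pw_pos: "-1 < x \<Longrightarrow> x < 1 \<Longrightarrow> pw e x > 0"
  unfolding pw_def by simp

lemma kw_pos: "-1 < x \<Longrightarrow> x < 1 \<Longrightarrow> kw e x > 0"
proof -
  assume "-1 < x" "x < 1"
  then have "1 - x\<^sup>2 > 0" by (simp add: abs_square_less_1)
  with pw_pos[OF \<open>-1<x\<close> \<open>x<1\<close>] show ?thesis unfolding kw_def by simp
qed

lemma pw_deriv:
  assumes "-1 < x" "x < 1"
  shows "(pw e has_real_derivative (e * pw e x / (1 - x\<^sup>2))) (at x)"
proof -
  have q: "((\<lambda>x. (1+x)/(1-x)) has_real_derivative 2/(1-x)\<^sup>2) (at x)"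
    using assms by (auto intro!: derivative_eq_intros simp: field_simps power2_eq_square)
  have qp: "(1+x)/(1-x) > 0" using assms by simp
  have "((\<lambda>x. ((1+x)/(1-x)) powr (e/2)) has_real_derivative
        (e/2) * ((1+x)/(1-x)) powr (e/2 - of_nat 1) * (2/(1-x)\<^sup>2)) (at x)"
    by (rule DERIV_fun_powr[OF q qp])
  moreover have "(e/2) * ((1+x)/(1-x)) powr (e/2 - of_nat 1) * (2/(1-x)\<^sup>2) = e * pw e x / (1 - x\<^sup>2)"
  proof -
    have h1: "((1+x)/(1-x)) powr (e/2 - of_nat 1) = pw e x / ((1+x)/(1-x))"
      unfolding pw_def using qp assms by (simp add: powr_diff)
    have h2: "1 - x\<^sup>2 = (1+x)*(1-x)" by (simp add: power2_eq_square algebra_simps)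
    have "1 + x \<noteq> 0" "1 - x \<noteq> 0" using assms by auto
    then show ?thesis unfolding h1 using h2 by (simp add: divide_simps power2_eq_square)
  qed
  ultimately show ?thesis unfolding pw_def[abs_def] by simp
qed


lemma cmp_deriv:
  fixes f f' :: "real \<Rightarrow> complex" and g g' :: "real \<Rightarrow> real"
  assumes "x \<le> y"
   and fd: "\<And>t. x \<le> t \<Longrightarrow> t \<le> y \<Longrightarrow> (f has_vector_derivative f' t) (at t)"
   and gd: "\<And>t. x \<le> t \<Longrightarrow> t \<le> y \<Longrightarrow> (g has_real_derivative g' t) (at t)"
   and le: "\<And>t. x \<le> t \<Longrightarrow> t \<le> y \<Longrightarrow> cmod (f' t) \<le> g' t"
  shows "cmod (f y - f x) \<le> g y - g x"
proof -
  define d where "d = f y - f x"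
  define u where "u = cnj d / of_real (cmod d)"
  have ud: "Re (u * d) = cmod d"
  proof (cases "d = 0")
    case True then show ?thesis by (simp add: u_def)
  next
    case False
    have "u * d = of_real ((cmod d)^2) / of_real (cmod d)"
      unfolding u_def by (metis complex_norm_square mult.commute times_divide_eq_left)
    also have "\<dots> = of_real (cmod d)" using False by (simp add: power2_eq_square)
    finally show ?thesis by simp
  qed
  have u1: "cmod u \<le> 1"
    by (cases "d = 0") (auto simp: u_def norm_divide)
  define \<phi> where "\<phi> t = Re (u * f t) - g t" for t
  have "\<phi> y \<le> \<phi> x"
  proof (rule DERIV_nonpos_imp_nonincreasing[OF \<open>x \<le> y\<close>])
    fix t assume t: "x \<le> t" "t \<le> y"
    have "((\<lambda>t. Re (u * f t)) has_real_derivative Re (u * f' t)) (at t)"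
      by (rule has_field_derivative_Re, rule has_vector_derivative_mult_right, rule fd) (use t in auto)
    then have "(\<phi> has_real_derivative Re (u * f' t) - g' t) (at t)"
      unfolding \<phi>_def by (rule DERIV_diff[OF _ gd]) (use t in auto)
    moreover have "Re (u * f' t) \<le> g' t"
    proof -
      have "Re (u * f' t) \<le> cmod (u * f' t)" by (rule complex_Re_le_cmod)
      also have "\<dots> \<le> cmod (f' t)" using u1 by (simp add: norm_mult mult_left_le_one_le)
      also have "\<dots> \<le> g' t" using le t by auto
      finally show ?thesis .
    qed
    ultimately show "\<exists>z. (\<phi> has_real_derivative z) (at t) \<and> z \<le> 0" by (intro exI[of _ "Re (u * f' t) - g' t"]) auto
  qed
  then have "Re (u * d) \<le> g y - g x" unfolding \<phi>_def d_def by (simp add: algebra_simps)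
  then show ?thesis using ud d_def by simp
qed


lemma bdd_from_deriv:
  fixes v v' :: "real \<Rightarrow> complex"
  assumes "c < e" and vd: "\<And>x. c < x \<Longrightarrow> x < e \<Longrightarrow> (v has_vector_derivative v' x) (at x)"
    and vb: "\<And>x. c < x \<Longrightarrow> x < e \<Longrightarrow> cmod (v' x) \<le> M"
  shows "\<exists>B. \<forall>x. c < x \<longrightarrow> x < e \<longrightarrow> cmod (v x) \<le> B"
proof -
  define m where "m = (c + e) / 2"
  have m: "c < m" "m < e" using assms(1) by (auto simp: m_def)
  have "cmod (v x) \<le> cmod (v m) + M * (e - c)" if x: "c < x" "x < e" for x
  proof (cases "m \<le> x")
    case True
    have "cmod (v x - v m) \<le> M * x - M * m"
      by (rule cmp_deriv[OF True, of v v' "\<lambda>t. M * t" "\<lambda>_. M"])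
         (use m x in \<open>auto intro!: vd vb derivative_eq_intros\<close>)
    moreover have "M * x - M * m \<le> M * (e - c)"
    proof -
      have "0 \<le> M" using vb[OF x] norm_ge_zero order_trans by blast
      then show ?thesis using m x by (simp add: right_diff_distrib[symmetric] mult_left_mono)
    qed
    ultimately show ?thesis using norm_triangle_ineq2[of "v x" "v m"] by linarith
  next
    case False
    have "cmod (v m - v x) \<le> M * m - M * x"
      by (rule cmp_deriv[of x m v v' "\<lambda>t. M * t" "\<lambda>_. M"])
         (use m x False in \<open>auto intro!: vd vb derivative_eq_intros\<close>)
    moreover have "M * m - M * x \<le> M * (e - c)"
    proof -
      have "0 \<le> M" using vb[OF x] norm_ge_zero order_trans by blast
      then show ?thesis using m x False by (simp add: right_diff_distrib[symmetric] mult_left_mono)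
    qed
    ultimately show ?thesis using norm_triangle_ineq2[of "v x" "v m"] norm_minus_commute[of "v m" "v x"] by linarith
  qed
  then show ?thesis by blast
qed

lemma prod_tendsto_zero:
  fixes v w :: "real \<Rightarrow> complex"
  assumes "(w \<longlongrightarrow> 0) F" "eventually (\<lambda>x. cmod (v x) \<le> B) F"
  shows "((\<lambda>x. v x * cnj (w x)) \<longlongrightarrow> 0) F"
proof (rule Lim_null_comparison)
  show "\<forall>\<^sub>F x in F. norm (v x * cnj (w x)) \<le> \<bar>B\<bar> * cmod (w x)"
    using assms(2) by eventually_elim (auto simp: norm_mult intro!: mult_right_mono)
  have "((\<lambda>x. cmod (w x)) \<longlongrightarrow> 0) F" using assms(1) by (rule tendsto_norm_zero)
  then show "((\<lambda>x. \<bar>B\<bar> * cmod (w x)) \<longlongrightarrow> 0) F" by (rule tendsto_mult_right_zero)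
qed


lemma small_near_left:
  fixes w :: "real \<Rightarrow> complex"
  assumes "(w \<longlongrightarrow> 0) (at_left e)"
  obtains b where "b < e" "\<And>y. b < y \<Longrightarrow> y < e \<Longrightarrow> cmod (w y) \<le> 1"
proof -
  have "eventually (\<lambda>y. dist (w y) 0 < 1) (at_left e)" using tendstoD[OF assms] by simp
  then obtain b where "b < e" "\<forall>y>b. y < e \<longrightarrow> dist (w y) 0 < 1"
    unfolding eventually_at_left_field by blast
  then show ?thesis using that by force
qed

lemma small_near_right:
  fixes w :: "real \<Rightarrow> complex"
  assumes "(w \<longlongrightarrow> 0) (at_right e)"
  obtains b where "e < b" "\<And>y. e < y \<Longrightarrow> y < b \<Longrightarrow> cmod (w y) \<le> 1"
proof -
  have "eventually (\<lambda>y. dist (w y) 0 < 1) (at_right e)" using tendstoD[OF assms] by simp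
  then obtain b where "e < b" "\<forall>y>e. y < b \<longrightarrow> dist (w y) 0 < 1"
    unfolding eventually_at_right_field by blast
  then show ?thesis using that by force
qed

lemma kw_bound_reg:
  assumes "0 < x0" "x0 < 1" "-x0 < x" "x < x0" "0 \<le> e"
  shows "kw e x \<le> ((1+x0)/(1-x0)) powr (e/2) / (1 - x0\<^sup>2)"
proof -
  have q: "(1+x)/(1-x) \<le> (1+x0)/(1-x0)" using assms by (simp add: divide_simps) (simp add: algebra_simps)
  have p: "pw e x \<le> ((1+x0)/(1-x0)) powr (e/2)" unfolding pw_def
    by (rule powr_mono2[OF _ _ q]) (use assms in auto)
  have "x\<^sup>2 \<le> x0\<^sup>2" using assms abs_le_square_iff[of x x0] by auto
  moreover have "x0\<^sup>2 < 1" using assms by (simp add: abs_square_less_1)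
  ultimately show ?thesis unfolding kw_def by (intro frac_le p) auto
qed

lemma F_lim_reg:
  fixes w v :: "real \<Rightarrow> complex"
  assumes "0 < x0" "x0 < 1" "0 \<le> \<epsilon>"
   and vd: "\<And>x. -x0 < x \<Longrightarrow> x < x0 \<Longrightarrow> (v has_vector_derivative \<mu> * of_real (kw \<epsilon> x) * w x) (at x)"
   and wl: "(w \<longlongrightarrow> 0) (at_left x0)" and wr: "(w \<longlongrightarrow> 0) (at_right (-x0))"
  shows "((\<lambda>x. v x * cnj (w x)) \<longlongrightarrow> 0) (at_left x0) \<and> ((\<lambda>x. v x * cnj (w x)) \<longlongrightarrow> 0) (at_right (-x0))"
proof
  define K where "K = ((1+x0)/(1-x0)) powr (\<epsilon>/2) / (1 - x0\<^sup>2)"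
  have kb: "0 < kw \<epsilon> x \<and> kw \<epsilon> x \<le> K" if "-x0 < x" "x < x0" for x
    using kw_bound_reg[OF assms(1,2) that assms(3)] kw_pos[of x \<epsilon>] that assms by (auto simp: K_def)
  have vb: "cmod (\<mu> * of_real (kw \<epsilon> x) * w x) \<le> cmod \<mu> * K" if "-x0 < x" "x < x0" "cmod (w x) \<le> 1" for x
  proof -
    have "cmod (\<mu> * of_real (kw \<epsilon> x) * w x) = cmod \<mu> * (kw \<epsilon> x * cmod (w x))"
      using kb[OF that(1,2)] by (simp add: norm_mult)
    also have "\<dots> \<le> cmod \<mu> * (K * 1)"
      using kb[OF that(1,2)] that(3) by (intro mult_left_mono mult_mono) auto
    finally show ?thesis by simp
  qed
  obtain b where b: "b < x0" "\<And>y. b < y \<Longrightarrow> y < x0 \<Longrightarrow> cmod (w y) \<le> 1" using small_near_left[OF wl] by blast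
  define c where "c = max b 0"
  have "\<exists>B. \<forall>x. c < x \<longrightarrow> x < x0 \<longrightarrow> cmod (v x) \<le> B"
  proof (rule bdd_from_deriv[of c x0 v "\<lambda>x. \<mu> * of_real (kw \<epsilon> x) * w x" "cmod \<mu> * K"])
    show "c < x0" using b assms(1) by (simp add: c_def)
  next
    fix x assume x: "c < x" "x < x0"
    then have "-x0 < x" "b < x" using assms(1) by (auto simp: c_def)
    then show "(v has_vector_derivative \<mu> * of_real (kw \<epsilon> x) * w x) (at x)"
      "cmod (\<mu> * of_real (kw \<epsilon> x) * w x) \<le> cmod \<mu> * K"
      using vd vb b(2) x by auto
  qed
  then obtain B where B: "\<forall>x. c < x \<longrightarrow> x < x0 \<longrightarrow> cmod (v x) \<le> B" by blast
  have "eventually (\<lambda>x. cmod (v x) \<le> B) (at_left x0)"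
    using eventually_at_left_real[of c x0] b assms(1) B by (auto simp: c_def elim!: eventually_mono)
  then show "((\<lambda>x. v x * cnj (w x)) \<longlongrightarrow> 0) (at_left x0)" by (rule prod_tendsto_zero[OF wl])
next
  define K where "K = ((1+x0)/(1-x0)) powr (\<epsilon>/2) / (1 - x0\<^sup>2)"
  have kb: "0 < kw \<epsilon> x \<and> kw \<epsilon> x \<le> K" if "-x0 < x" "x < x0" for x
    using kw_bound_reg[OF assms(1,2) that assms(3)] kw_pos[of x \<epsilon>] that assms by (auto simp: K_def)
  have vb: "cmod (\<mu> * of_real (kw \<epsilon> x) * w x) \<le> cmod \<mu> * K" if "-x0 < x" "x < x0" "cmod (w x) \<le> 1" for x
  proof -
    have "cmod (\<mu> * of_real (kw \<epsilon> x) * w x) = cmod \<mu> * (kw \<epsilon> x * cmod (w x))"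
      using kb[OF that(1,2)] by (simp add: norm_mult)
    also have "\<dots> \<le> cmod \<mu> * (K * 1)"
      using kb[OF that(1,2)] that(3) by (intro mult_left_mono mult_mono) auto
    finally show ?thesis by simp
  qed
  obtain b where b: "-x0 < b" "\<And>y. -x0 < y \<Longrightarrow> y < b \<Longrightarrow> cmod (w y) \<le> 1" using small_near_right[OF wr] by blast
  define c where "c = min b 0"
  have "\<exists>B. \<forall>x. -x0 < x \<longrightarrow> x < c \<longrightarrow> cmod (v x) \<le> B"
  proof (rule bdd_from_deriv[of "-x0" c v "\<lambda>x. \<mu> * of_real (kw \<epsilon> x) * w x" "cmod \<mu> * K"])
    show "-x0 < c" using b assms(1) by (simp add: c_def)
  next
    fix x assume x: "-x0 < x" "x < c"
    then have "x < x0" "x < b" using assms(1) by (auto simp: c_def)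
    then show "(v has_vector_derivative \<mu> * of_real (kw \<epsilon> x) * w x) (at x)"
      "cmod (\<mu> * of_real (kw \<epsilon> x) * w x) \<le> cmod \<mu> * K"
      using vd vb b(2) x by auto
  qed
  then obtain B where B: "\<forall>x. -x0 < x \<longrightarrow> x < c \<longrightarrow> cmod (v x) \<le> B" by blast
  have "eventually (\<lambda>x. cmod (v x) \<le> B) (at_right (-x0))"
    using eventually_at_right_real[of "-x0" c] b assms(1) B by (auto simp: c_def elim!: eventually_mono)
  then show "((\<lambda>x. v x * cnj (w x)) \<longlongrightarrow> 0) (at_right (-x0))" by (rule prod_tendsto_zero[OF wr])
qed


lemma kw_bound_left:
  assumes "-1 < x" "x \<le> 0" "0 \<le> e"
  shows "kw e x \<le> (1+x) powr (e/2 - 1)"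
proof -
  have x1: "0 < 1 + x" "1 \<le> 1 - x" using assms by auto
  have "pw e x = (1+x) powr (e/2) / (1-x) powr (e/2)"
    unfolding pw_def using x1 by (simp add: powr_divide)
  also have "\<dots> \<le> (1+x) powr (e/2)"
  proof -
    have "1 \<le> (1-x) powr (e/2)" using x1 assms by (intro ge_one_powr_ge_zero) auto
    then show ?thesis by (simp add: divide_le_eq order_trans[OF _ mult_left_mono[of 1]] )
  qed
  finally have p: "pw e x \<le> (1+x) powr (e/2)" .
  have "1 - x\<^sup>2 = (1+x) * (1-x)" by (simp add: power2_eq_square algebra_simps)
  then have d: "1 + x \<le> 1 - x\<^sup>2" using x1 by (simp add: mult_le_cancel_left1)
  have "kw e x \<le> (1+x) powr (e/2) / (1 + x)"
    unfolding kw_def by (rule frac_le) (use p d x1 pw_pos[of x e] assms in auto)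
  also have "\<dots> = (1+x) powr (e/2 - 1)" using x1 by (simp add: powr_diff)
  finally show ?thesis .
qed

lemma F_lim_left_pos:
  fixes w v :: "real \<Rightarrow> complex"
  assumes "0 < \<epsilon>"
   and vd: "\<And>x. -1 < x \<Longrightarrow> x < 1 \<Longrightarrow> (v has_vector_derivative \<mu> * of_real (kw \<epsilon> x) * w x) (at x)"
   and wr: "(w \<longlongrightarrow> 0) (at_right (-1))"
  shows "((\<lambda>x. v x * cnj (w x)) \<longlongrightarrow> 0) (at_right (-1))"
proof -
  define a where "a = \<epsilon> / 2"
  have a: "a > 0" using assms(1) by (simp add: a_def)
  obtain b where b: "-1 < b" "\<And>y. -1 < y \<Longrightarrow> y < b \<Longrightarrow> cmod (w y) \<le> 1" using small_near_right[OF wr] by auto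
  define m where "m = (min b 0 - 1) / 2"
  have m: "-1 < m" "m < b" "m < 0" using b(1) by (auto simp: m_def)
  define g where "g t = cmod \<mu> * ((1+t) powr a / a)" for t
  have gd: "(g has_real_derivative cmod \<mu> * (1+t) powr (a - 1)) (at t)" if "-1 < t" for t
  proof -
    have "((\<lambda>t. (1+t) powr a) has_real_derivative a * (1+t) powr (a - of_nat 1) * 1) (at t)"
      by (rule DERIV_fun_powr) (use that in \<open>auto intro!: derivative_eq_intros\<close>)
    then have "((\<lambda>t. cmod \<mu> * ((1+t) powr a / a)) has_real_derivative cmod \<mu> * (a * (1+t) powr (a - of_nat 1) * 1 / a)) (at t)"
      by (intro DERIV_cmult DERIV_cdivide)
    then show ?thesis using a unfolding g_def[abs_def] by simp
  qed
  have vb: "cmod (v x) \<le> cmod (v m) + g m" if x: "-1 < x" "x < m" for x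
  proof -
    have "cmod (v m - v x) \<le> g m - g x"
    proof (rule cmp_deriv[of x m v "\<lambda>x. \<mu> * of_real (kw \<epsilon> x) * w x" g "\<lambda>t. cmod \<mu> * (1+t) powr (a - 1)"])
      fix t assume t: "x \<le> t" "t \<le> m"
      then have t1: "-1 < t" "t < 1" "t \<le> 0" "t < b" using x m by auto
      show "(v has_vector_derivative \<mu> * of_real (kw \<epsilon> t) * w t) (at t)" using vd t1 by auto
      show "(g has_real_derivative cmod \<mu> * (1+t) powr (a - 1)) (at t)" using gd t1 by auto
      have "cmod (\<mu> * of_real (kw \<epsilon> t) * w t) = cmod \<mu> * (kw \<epsilon> t * cmod (w t))"
        using kw_pos[of t \<epsilon>] t1 by (simp add: norm_mult)
      also have "\<dots> \<le> cmod \<mu> * ((1+t) powr (a - 1) * 1)"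
        using kw_bound_left[of t \<epsilon>] kw_pos[of t \<epsilon>] t1 b(2)[of t] assms(1) unfolding a_def
        by (intro mult_left_mono mult_mono) auto
      finally show "cmod (\<mu> * of_real (kw \<epsilon> t) * w t) \<le> cmod \<mu> * (1+t) powr (a - 1)" by simp
    qed (use x in auto)
    moreover have "g x \<ge> 0" using a by (simp add: g_def)
    ultimately show ?thesis using norm_triangle_ineq2[of "v x" "v m"] norm_minus_commute[of "v m" "v x"] by linarith
  qed
  have "eventually (\<lambda>x. cmod (v x) \<le> cmod (v m) + g m) (at_right (-1))"
    using eventually_at_right_real[OF m(1)] by eventually_elim (use vb in auto)
  then show ?thesis by (rule prod_tendsto_zero[OF wr])
qed


definition qf :: "real \<Rightarrow> real \<Rightarrow> real" where
  "qf a x = (1+x) powr a"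
definition Bf :: "real \<Rightarrow> real \<Rightarrow> real" where
  "Bf a x = (1-x) powr (1+a) / (1+a)"
definition Gf :: "real \<Rightarrow> real \<Rightarrow> real" where
  "Gf a x = 2 powr a * (1-x) powr (-(a+1/2)) / (a+1/2)"

lemma pw_alt: "-1 < x \<Longrightarrow> x < 1 \<Longrightarrow> pw e x = qf (e/2) x / (1-x) powr (e/2)"
  unfolding pw_def qf_def by (simp add: powr_divide)

lemma qf_bounds:
  assumes "0 \<le> x" "x < 1" "0 \<le> a"
  shows "1 \<le> qf a x" "qf a x \<le> 2 powr a" "qf a x / (1+x) \<le> 2 powr a"
proof -
  show q1: "1 \<le> qf a x" unfolding qf_def using assms by (intro ge_one_powr_ge_zero) auto
  show q2: "qf a x \<le> 2 powr a" unfolding qf_def using assms by (intro powr_mono2) auto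
  have "qf a x / (1+x) \<le> qf a x" using q1 assms by (simp add: divide_le_eq mult_le_cancel_left1)
  then show "qf a x / (1+x) \<le> 2 powr a" using q2 by linarith
qed

lemma Gf_deriv:
  assumes "x < 1" "0 \<le> a"
  shows "(Gf a has_real_derivative 2 powr a * (1-x) powr (-(a+3/2))) (at x)"
proof -
  have "((\<lambda>x. (1-x) powr (-(a+1/2))) has_real_derivative (-(a+1/2)) * (1-x) powr (-(a+1/2) - of_nat 1) * (-1)) (at x)"
    by (rule DERIV_fun_powr) (use assms in \<open>auto intro!: derivative_eq_intros\<close>)
  moreover have "(-(a+1/2)) * (1-x) powr (-(a+1/2) - of_nat 1) * (-1) = (a+1/2) * (1-x) powr (-(a+3/2))"
  proof -
    have e1: "-(a+1/2) - of_nat 1 = -(a+3/2)" by simp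
    show ?thesis unfolding e1 by (simp add: algebra_simps)
  qed
  ultimately have "((\<lambda>x. (1-x) powr (-(a+1/2))) has_real_derivative (a+1/2) * (1-x) powr (-(a+3/2))) (at x)"
    by (rule DERIV_cong)
  then have "(Gf a has_real_derivative 2 powr a * ((a+1/2) * (1-x) powr (-(a+3/2))) / (a+1/2)) (at x)"
    unfolding Gf_def[abs_def] by (intro DERIV_cmult DERIV_cdivide)
  moreover have "2 powr a * ((a+1/2) * P) / (a+1/2) = 2 powr a * P" for P
    using assms by simp
  ultimately show ?thesis by simp
qed

lemma q_over_pw:
  assumes "-1 < x" "x < 1"
  shows "qf (e/2) x / pw e x = (1-x) powr (e/2)"
  using assms by (simp add: pw_alt qf_def)

lemma kw_alt:
  assumes "-1 < x" "x < 1"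
  shows "kw e x = (qf (e/2) x / (1+x)) * (1 / ((1-x) powr (e/2) * (1-x)))"
proof -
  have h: "1 - x\<^sup>2 = (1+x)*(1-x)" by (simp add: power2_eq_square algebra_simps)
  show ?thesis unfolding kw_def h pw_alt[OF assms] by simp
qed

lemma kwB:
  assumes "-1 < x" "x < 1" "0 \<le> e"
  shows "kw e x * Bf (e/2) x = qf (e/2) x / ((1+e/2) * (1+x))"
proof -
  have p: "(1-x) powr (1+e/2) = (1-x) * (1-x) powr (e/2)" using assms by (simp add: powr_add)
  have alg: "(Q/U) * (1/(S*T)) * (T*S/A) = Q/(A*U)" if "S > 0" "T > 0" "A \<noteq> 0" "U \<noteq> 0" for Q U S T A :: real
    using that by (simp add: field_simps)
  have "(1-x) powr (e/2) > 0" "1 - x > 0" "1 + e/2 \<noteq> 0" "1 + x \<noteq> 0" using assms by auto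
  then show ?thesis unfolding kw_alt[OF assms(1,2)] Bf_def p by (rule alg)
qed

lemma kw_le_G':
  assumes "0 \<le> x" "x < 1" "0 \<le> e"
  shows "kw e x \<le> 2 powr (e/2) * (1-x) powr (-(e/2+3/2))"
proof -
  have s: "0 < 1 - x" "1 - x \<le> 1" using assms by auto
  have i: "1 / ((1-x) powr (e/2) * (1-x)) = (1-x) powr (-(e/2+1))"
  proof -
    have "(1-x) powr (e/2+1) = (1-x) powr (e/2) * (1-x)" using s by (simp add: powr_add)
    then show ?thesis by (simp only: powr_minus divide_inverse mult_1_left)
  qed
  have k: "kw e x = (qf (e/2) x / (1+x)) * (1 / ((1-x) powr (e/2) * (1-x)))"
    by (rule kw_alt) (use assms in auto)
  have "kw e x \<le> 2 powr (e/2) * (1 / ((1-x) powr (e/2) * (1-x)))"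
    unfolding k by (rule mult_right_mono[OF qf_bounds(3)]) (use assms s in auto)
  also have "\<dots> \<le> 2 powr (e/2) * (1-x) powr (-(e/2+3/2))"
    unfolding i by (rule mult_left_mono[OF powr_mono']) (use s in auto)
  finally show ?thesis .
qed

lemma BG:
  assumes "x < 1" "0 \<le> a"
  shows "Bf a x * Gf a x = (2 powr a / ((1+a) * (a+1/2))) * (1-x) powr (1/2)"
proof -
  have "(1-x) powr (1+a) * (1-x) powr (-(a+1/2)) = (1-x) powr (1/2)"
    using assms by (simp add: powr_add[symmetric])
  moreover have alg: "(X/A) * (Y*Z/B) = (Y/(A*B)) * (X*Z)" for X A Y Z B :: real
    by simp
  ultimately show ?thesis unfolding Bf_def Gf_def by metis
qed

lemma qf_deriv:
  assumes "-1 < x"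
  shows "(qf a has_real_derivative a * qf a x / (1+x)) (at x)"
proof -
  have "((\<lambda>x. (1+x) powr a) has_real_derivative a * (1+x) powr (a - of_nat 1) * 1) (at x)"
    by (rule DERIV_fun_powr) (use assms in \<open>auto intro!: derivative_eq_intros\<close>)
  moreover have "a * (1+x) powr (a - of_nat 1) * 1 = a * (1+x) powr a / (1+x)"
    using assms by (simp add: powr_diff)
  ultimately show ?thesis unfolding qf_def[abs_def] by simp
qed


lemma Bf_deriv:
  assumes "x < 1" "0 \<le> a"
  shows "(Bf a has_real_derivative - ((1-x) powr a)) (at x)"
proof -
  have "((\<lambda>x. (1-x) powr (1+a)) has_real_derivative (1+a) * (1-x) powr (1+a - of_nat 1) * (-1)) (at x)"
    by (rule DERIV_fun_powr) (use assms in \<open>auto intro!: derivative_eq_intros\<close>)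
  then have "(Bf a has_real_derivative (1+a) * (1-x) powr (1+a - of_nat 1) * (-1) / (1+a)) (at x)"
    unfolding Bf_def[abs_def] by (rule DERIV_cdivide)
  then show ?thesis using assms by simp
qed


lemma Bf_antimono:
  assumes "x \<le> y" "y < 1" "0 \<le> a"
  shows "Bf a y \<le> Bf a x"
  unfolding Bf_def using assms by (intro divide_right_mono powr_mono2) auto


lemma Bf_pos: "x < 1 \<Longrightarrow> 0 \<le> a \<Longrightarrow> Bf a x > 0"
  unfolding Bf_def by simp


lemma Gf_nonneg: "0 \<le> a \<Longrightarrow> 0 \<le> Gf a x"
  unfolding Gf_def by simp




lemma lim_s_powr:
  assumes "0 < p"
  shows "((\<lambda>x::real. (1-x) powr p) \<longlongrightarrow> 0) (at_left 1)"
proof (rule tendsto_zero_powrI[OF _ tendsto_const _ assms])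
  have "((\<lambda>x::real. 1 - x) \<longlongrightarrow> 1 - 1) (at_left 1)"
    by (intro tendsto_intros)
  then show "((\<lambda>x::real. 1 - x) \<longlongrightarrow> 0) (at_left 1)" by simp
  show "\<forall>\<^sub>F x in at_left (1::real). 0 \<le> 1 - x"
    using eventually_at_left_real[of 0 1] by (auto elim!: eventually_mono)
qed

lemma bdd_tail:
  fixes f :: "real \<Rightarrow> complex"
  assumes "b < 1" and c: "\<And>x. b \<le> x \<Longrightarrow> x < 1 \<Longrightarrow> isCont f x" and l: "(f \<longlongrightarrow> 0) (at_left 1)"
  shows "bdd_above ((\<lambda>x. cmod (f x)) ` {b..<1})"
proof -
  obtain c0 where c0: "c0 < 1" "\<And>y. c0 < y \<Longrightarrow> y < 1 \<Longrightarrow> cmod (f y) \<le> 1" using small_near_left[OF l] by blast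
  define d where "d = max b c0"
  have "continuous_on {b..d} f"
    using c d_def c0 assms(1) by (intro continuous_at_imp_continuous_on) auto
  then have "bounded (f ` {b..d})" by (intro compact_imp_bounded compact_continuous_image) auto
  then obtain B where B: "\<And>x. x \<in> {b..d} \<Longrightarrow> norm (f x) \<le> B" unfolding bounded_iff by blast
  have "cmod (f x) \<le> max B 1" if "x \<in> {b..<1}" for x
  proof (cases "x \<le> d")
    case True then show ?thesis using B[of x] that by fastforce
  next
    case False then have "c0 < x" by (simp add: d_def)
    then show ?thesis using c0(2)[of x] that by auto
  qed
  then show ?thesis by (intro bdd_aboveI2) auto
qed

lemma sq_gronwall:
  fixes v v' :: "real \<Rightarrow> complex"
  assumes "b < 1" "0 \<le> L"
    and vd: "\<And>x. b \<le> x \<Longrightarrow> x < 1 \<Longrightarrow> (v has_vector_derivative v' x) (at x)"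
    and vb: "\<And>x. b \<le> x \<Longrightarrow> x < 1 \<Longrightarrow> cmod (v' x) \<le> L * cmod (v x)"
  shows "\<exists>D. \<forall>x. b \<le> x \<longrightarrow> x < 1 \<longrightarrow> cmod (v x) \<le> D"
proof -
  define \<phi> where "\<phi> x = Re (v x * cnj (v x)) * exp (-(2*L)*x)" for x
  have phi: "\<phi> x = (cmod (v x))\<^sup>2 * exp (-(2*L)*x)" for x
    unfolding \<phi>_def by (simp add: complex_mult_cnj cmod_power2)
  have dec: "\<phi> x \<le> \<phi> b" if x: "b \<le> x" "x < 1" for x
  proof (rule DERIV_nonpos_imp_nonincreasing[OF x(1)])
    fix t assume t: "b \<le> t" "t \<le> x"
    then have t1: "b \<le> t" "t < 1" using x by auto
    have d1: "((\<lambda>x. Re (v x * cnj (v x))) has_real_derivative Re (v t * cnj (v' t) + v' t * cnj (v t))) (at t)"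
      by (rule has_field_derivative_Re, rule has_vector_derivative_mult[OF vd[OF t1] has_vector_derivative_cnj[OF vd[OF t1]]])
    have d2: "((\<lambda>x. exp (-(2*L)*x)) has_real_derivative exp (-(2*L)*t) * (-(2*L))) (at t)"
      by (auto intro!: derivative_eq_intros)
    have "(\<phi> has_real_derivative Re (v t * cnj (v' t) + v' t * cnj (v t)) * exp (-(2*L)*t)
        + exp (-(2*L)*t) * (-(2*L)) * Re (v t * cnj (v t))) (at t)"
      unfolding \<phi>_def[abs_def] by (rule DERIV_mult[OF d1 d2])
    moreover have "Re (v t * cnj (v' t) + v' t * cnj (v t)) * exp (-(2*L)*t)
        + exp (-(2*L)*t) * (-(2*L)) * Re (v t * cnj (v t)) \<le> 0"
    proof -
      have r1: "Re (v t * cnj (v' t) + v' t * cnj (v t)) \<le> 2 * L * (cmod (v t))\<^sup>2"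
      proof -
        have "Re (v t * cnj (v' t)) \<le> cmod (v t * cnj (v' t))" by (rule complex_Re_le_cmod)
        moreover have "Re (v' t * cnj (v t)) \<le> cmod (v' t * cnj (v t))" by (rule complex_Re_le_cmod)
        have m: "cmod (v t) * cmod (v' t) \<le> cmod (v t) * (L * cmod (v t))"
          by (rule mult_left_mono[OF vb[OF t1]]) simp
        moreover have "cmod (v t * cnj (v' t)) \<le> L * (cmod (v t))\<^sup>2"
          using m by (simp add: norm_mult power2_eq_square algebra_simps)
        moreover have "cmod (v' t * cnj (v t)) \<le> L * (cmod (v t))\<^sup>2"
          using m by (simp add: norm_mult power2_eq_square algebra_simps)
        ultimately show ?thesis by simp
      qed
      have r2: "Re (v t * cnj (v t)) = (cmod (v t))\<^sup>2" by (simp add: complex_mult_cnj cmod_power2)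
      have "Re (v t * cnj (v' t) + v' t * cnj (v t)) * exp (-(2*L)*t) \<le> 2 * L * (cmod (v t))\<^sup>2 * exp (-(2*L)*t)"
        using r1 by (intro mult_right_mono) auto
      then show ?thesis unfolding r2 by (simp add: algebra_simps)
    qed
    ultimately show "\<exists>y. (\<phi> has_real_derivative y) (at t) \<and> y \<le> 0" by blast
  qed
  define D where "D = max 1 ((cmod (v b))\<^sup>2 * exp ((2*L)*(1-b)))"
  have "cmod (v x) \<le> D" if x: "b \<le> x" "x < 1" for x
  proof -
    have "(cmod (v x))\<^sup>2 * exp (-(2*L)*x) \<le> (cmod (v b))\<^sup>2 * exp (-(2*L)*b)"
      using dec[OF x] unfolding phi .
    then have "(cmod (v x))\<^sup>2 \<le> (cmod (v b))\<^sup>2 * exp (-(2*L)*b) / exp (-(2*L)*x)"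
      by (simp add: pos_le_divide_eq)
    also have "\<dots> = (cmod (v b))\<^sup>2 * exp ((2*L)*(x-b))"
      by (simp add: exp_diff[symmetric] algebra_simps)
      (simp add: exp_minus divide_inverse exp_add[symmetric] exp_diff algebra_simps)
    also have "\<dots> \<le> (cmod (v b))\<^sup>2 * exp ((2*L)*(1-b))"
      using x assms(2) by (intro mult_left_mono) (auto intro!: mult_left_mono)
    finally have sq: "(cmod (v x))\<^sup>2 \<le> D" unfolding D_def by linarith
    show ?thesis
    proof (cases "cmod (v x) \<le> 1")
      case True then show ?thesis by (simp add: D_def)
    next
      case False
      have "1 * cmod (v x) \<le> cmod (v x) * cmod (v x)" by (rule mult_right_mono) (use False in auto)
      then have "cmod (v x) \<le> (cmod (v x))\<^sup>2" by (simp add: power2_eq_square)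
      then show ?thesis using sq by linarith
    qed
  qed
  then show ?thesis by blast
qed



lemma alg_W:
  fixes v w \<mu> :: complex and Qr P S Kr Br a U :: real
  assumes "Qr / P = S" "Kr * Br = Qr / ((1+a)*U)" "P \<noteq> 0" "1 + a \<noteq> 0" "U \<noteq> 0"
  shows "of_real Qr * (v / of_real P) + of_real (a*Qr/U) * w + (of_real Br * (\<mu> * of_real Kr * w) + of_real (-S) * v)
     = of_real (Qr/U) * (of_real a + \<mu> / of_real (1+a)) * w"
proof -
  have e1: "of_real Qr * (v / of_real P) = of_real S * v"
    using assms(1,3) by (metis of_real_divide times_divide_eq_right mult.commute)
  have e2: "of_real Br * (\<mu> * of_real Kr * w) = \<mu> * of_real (Qr / ((1+a)*U)) * w"
    unfolding assms(2)[symmetric] by (simp add: algebra_simps)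
  have e3: "of_real (a*Qr/U) * w + \<mu> * of_real (Qr / ((1+a)*U)) * w = of_real (Qr/U) * (of_real a + \<mu> / of_real (1+a)) * w"
  proof -
    have r1: "a*Qr/U = (Qr/U) * a" by simp
    have r2: "Qr/((1+a)*U) = (Qr/U) * (1/(1+a))" by simp
    show ?thesis unfolding r1 r2 of_real_mult of_real_divide of_real_1
      by (simp add: algebra_simps divide_inverse)
  qed
  show ?thesis unfolding e1 e2 using e3 by (simp add: algebra_simps)
qed

lemma F_lim_right1:
  fixes w v :: "real \<Rightarrow> complex"
  assumes eps: "0 \<le> \<epsilon>"
   and wd: "\<And>x. 0 < x \<Longrightarrow> x < 1 \<Longrightarrow> (w has_vector_derivative v x / of_real (pw \<epsilon> x)) (at x)"
   and vd: "\<And>x. 0 < x \<Longrightarrow> x < 1 \<Longrightarrow> (v has_vector_derivative \<mu> * of_real (kw \<epsilon> x) * w x) (at x)"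
   and wl: "(w \<longlongrightarrow> 0) (at_left 1)"
  shows "((\<lambda>x. v x * cnj (w x)) \<longlongrightarrow> 0) (at_left 1)"
proof -
  define a where "a = \<epsilon> / 2"
  have a0: "0 \<le> a" using eps by (simp add: a_def)
  define Y where "Y x = of_real (Bf a x) * v x" for x
  define W where "W x = of_real (qf a x) * w x + Y x" for x
  define c1 where "c1 = of_real a + \<mu> / of_real (1+a)"
  define K1 where "K1 = 2 powr a * cmod c1"
  define C where "C = 2 powr a / ((1+a)*(a+1/2))"
  have K1: "0 \<le> K1" "0 \<le> C" using a0 by (auto simp: K1_def C_def)
  have Wd: "(W has_vector_derivative of_real (qf a x / (1+x)) * c1 * w x) (at x)" if x: "0 < x" "x < 1" for x
  proof -
    have qd: "(qf a has_real_derivative a * qf a x / (1+x)) (at x)" by (rule qf_deriv) (use x in auto)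
    have Bd: "(Bf a has_real_derivative - ((1-x) powr a)) (at x)" by (rule Bf_deriv) (use x a0 in auto)
    have "(W has_vector_derivative
       (of_real (qf a x) * (v x / of_real (pw \<epsilon> x)) + of_real (a * qf a x / (1+x)) * w x)
       + (of_real (Bf a x) * (\<mu> * of_real (kw \<epsilon> x) * w x) + of_real (- ((1-x) powr a)) * v x)) (at x)"
      unfolding W_def[abs_def] Y_def[abs_def]
      by (intro has_vector_derivative_add has_vector_derivative_mult has_vector_derivative_of_real qd Bd wd vd x)
    moreover have "(of_real (qf a x) * (v x / of_real (pw \<epsilon> x)) + of_real (a * qf a x / (1+x)) * w x)
       + (of_real (Bf a x) * (\<mu> * of_real (kw \<epsilon> x) * w x) + of_real (- ((1-x) powr a)) * v x)
       = of_real (qf a x / (1+x)) * c1 * w x"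
      unfolding c1_def
    proof (rule alg_W)
      show "qf a x / pw \<epsilon> x = (1-x) powr a" using q_over_pw[of x \<epsilon>] x by (simp add: a_def)
      show "kw \<epsilon> x * Bf a x = qf a x / ((1+a) * (1+x))" using kwB[of x \<epsilon>] x eps by (simp add: a_def)
      show "pw \<epsilon> x \<noteq> 0" using pw_pos[of x \<epsilon>] x by simp
      show "1 + a \<noteq> 0" "1 + x \<noteq> 0" using a0 x by auto
    qed
    ultimately show ?thesis by simp
  qed
  have Wd_bound: "cmod (of_real (qf a x / (1+x)) * c1 * w x) \<le> K1 * cmod (w x)" if x: "0 < x" "x < 1" for x
  proof -
    have q: "0 \<le> qf a x / (1+x)" "qf a x / (1+x) \<le> 2 powr a"
      using qf_bounds(1,3)[of x a] x a0 by auto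
    have "cmod (of_real (qf a x / (1+x)) * c1 * w x) = (qf a x / (1+x)) * (cmod c1 * cmod (w x))"
    proof -
      have "0 \<le> qf a x" "0 < 1 + x" using qf_bounds(1)[of x a] x a0 by auto
      then show ?thesis by (simp add: norm_mult del: of_real_divide)
    qed
    also have "\<dots> \<le> 2 powr a * (cmod c1 * cmod (w x))"
      by (rule mult_right_mono[OF q(2)]) simp
    finally show ?thesis by (simp add: K1_def)
  qed
  have vbound: "cmod (v x) \<le> cmod (v b) + cmod \<mu> * M * Gf a x"
    if b: "0 < b" "b \<le> x" "x < 1" and M: "\<And>s. b \<le> s \<Longrightarrow> s < 1 \<Longrightarrow> cmod (w s) \<le> M" for b x M
  proof -
    have M0: "0 \<le> M" using M[of b] b norm_ge_zero[of "w b"] by linarith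
    have "cmod (v x - v b) \<le> cmod \<mu> * M * Gf a x - cmod \<mu> * M * Gf a b"
    proof (rule cmp_deriv[of b x v "\<lambda>x. \<mu> * of_real (kw \<epsilon> x) * w x" "\<lambda>t. cmod \<mu> * M * Gf a t"
          "\<lambda>t. cmod \<mu> * M * (2 powr a * (1-t) powr (-(a+3/2)))"])
      fix t assume t: "b \<le> t" "t \<le> x"
      then have t1: "0 < t" "t < 1" using b by auto
      show "(v has_vector_derivative \<mu> * of_real (kw \<epsilon> t) * w t) (at t)" using vd t1 by auto
      show "((\<lambda>t. cmod \<mu> * M * Gf a t) has_real_derivative cmod \<mu> * M * (2 powr a * (1-t) powr (-(a+3/2)))) (at t)"
        by (intro DERIV_cmult Gf_deriv) (use t1 a0 in auto)
      have "cmod (\<mu> * of_real (kw \<epsilon> t) * w t) = cmod \<mu> * (kw \<epsilon> t * cmod (w t))"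
        using kw_pos[of t \<epsilon>] t1 by (simp add: norm_mult)
      also have "\<dots> \<le> cmod \<mu> * ((2 powr a * (1-t) powr (-(a+3/2))) * M)"
        using kw_le_G'[of t \<epsilon>] kw_pos[of t \<epsilon>] t1 M[of t] t eps M0 unfolding a_def
        by (intro mult_left_mono mult_mono) auto
      finally show "cmod (\<mu> * of_real (kw \<epsilon> t) * w t) \<le> cmod \<mu> * M * (2 powr a * (1-t) powr (-(a+3/2)))"
        by (simp add: algebra_simps)
    qed (use b in auto)
    moreover have "0 \<le> cmod \<mu> * M * Gf a b" using M0 Gf_nonneg[OF a0] by simp
    ultimately show ?thesis using norm_triangle_ineq2[of "v x" "v b"] by linarith
  qed
  have Ybound: "cmod (Y x) \<le> Bf a x * cmod (v b) + cmod \<mu> * M * C * (1-x) powr (1/2)"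
    if b: "0 < b" "b \<le> x" "x < 1" and M: "\<And>s. b \<le> s \<Longrightarrow> s < 1 \<Longrightarrow> cmod (w s) \<le> M" for b x M
  proof -
    have B0: "0 < Bf a x" using Bf_pos[of x a] b a0 by simp
    have "cmod (Y x) = Bf a x * cmod (v x)" using B0 by (simp add: Y_def norm_mult)
    also have "\<dots> \<le> Bf a x * (cmod (v b) + cmod \<mu> * M * Gf a x)"
      by (rule mult_left_mono[OF vbound[OF b M]]) (use B0 in auto)
    also have "\<dots> = Bf a x * cmod (v b) + cmod \<mu> * M * (Bf a x * Gf a x)" by (simp add: algebra_simps)
    also have "\<dots> = Bf a x * cmod (v b) + cmod \<mu> * M * C * (1-x) powr (1/2)"
      using BG[of x a] b a0 by (simp add: C_def)
    finally show ?thesis .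
  qed
  obtain b0 where b0: "b0 < 1" "\<And>y. b0 < y \<Longrightarrow> y < 1 \<Longrightarrow> cmod (w y) \<le> 1"
    using small_near_left[OF wl] by blast
  define m0 where "m0 = (max b0 0 + 1) / 2"
  have m0: "0 < m0" "b0 < m0" "m0 < 1" using b0 by (auto simp: m0_def)
  have Ylim: "(Y \<longlongrightarrow> 0) (at_left 1)"
  proof (rule Lim_null_comparison)
    show "\<forall>\<^sub>F x in at_left 1. norm (Y x) \<le> Bf a x * cmod (v m0) + cmod \<mu> * 1 * C * (1-x) powr (1/2)"
      using eventually_at_left_real[OF m0(3)]
    proof eventually_elim
      case (elim x)
      then show ?case using m0 b0 by (intro Ybound[of m0 x 1]) auto
    qed
    have "((\<lambda>x. Bf a x) \<longlongrightarrow> 0) (at_left 1)"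
      unfolding Bf_def by (intro tendsto_divide_zero lim_s_powr) (use a0 in auto)
    then have l1: "((\<lambda>x. Bf a x * cmod (v m0)) \<longlongrightarrow> 0) (at_left 1)" by (rule tendsto_mult_left_zero)
    have l2: "((\<lambda>x. cmod \<mu> * 1 * C * (1-x) powr (1/2)) \<longlongrightarrow> 0) (at_left 1)"
      by (rule tendsto_mult_right_zero[OF lim_s_powr]) simp
    show "((\<lambda>x. Bf a x * cmod (v m0) + cmod \<mu> * 1 * C * (1-x) powr (1/2)) \<longlongrightarrow> 0) (at_left 1)"
      by (rule tendsto_add_zero[OF l1 l2])
  qed
  have Wlim: "(W \<longlongrightarrow> 0) (at_left 1)"
  proof -
    have "((\<lambda>x. of_real (qf a x) * w x) \<longlongrightarrow> 0) (at_left 1)"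
    proof (rule Lim_null_comparison)
      show "\<forall>\<^sub>F x in at_left 1. norm (of_real (qf a x) * w x) \<le> 2 powr a * cmod (w x)"
        using eventually_at_left_real[OF zero_less_one]
      proof eventually_elim
        case (elim x)
        then have "0 \<le> qf a x" "qf a x \<le> 2 powr a" using qf_bounds(1,2)[of x a] a0 by auto
        then show ?case by (simp add: norm_mult mult_right_mono)
      qed
      show "((\<lambda>x. 2 powr a * cmod (w x)) \<longlongrightarrow> 0) (at_left 1)"
        by (rule tendsto_mult_right_zero[OF tendsto_norm_zero[OF wl]])
    qed
    then show ?thesis unfolding W_def[abs_def] by (rule tendsto_add_zero[OF _ Ylim])
  qed
  have Wbound: "cmod (W x) \<le> K1 * M * (1-x)"
    if x: "0 < x" "x < 1" and M: "\<And>s. x \<le> s \<Longrightarrow> s < 1 \<Longrightarrow> cmod (w s) \<le> M" for x M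
  proof -
    have M0: "0 \<le> M" using M[of x] x norm_ge_zero[of "w x"] by linarith
    have diff: "cmod (W x' - W x) \<le> K1 * M * x' - K1 * M * x" if x': "x \<le> x'" "x' < 1" for x'
    proof (rule cmp_deriv[of x x' W "\<lambda>t. of_real (qf a t / (1+t)) * c1 * w t" "\<lambda>t. K1 * M * t" "\<lambda>_. K1 * M"])
      fix t assume t: "x \<le> t" "t \<le> x'"
      then have t1: "0 < t" "t < 1" using x x' by auto
      show "(W has_vector_derivative of_real (qf a t / (1+t)) * c1 * w t) (at t)" by (rule Wd[OF t1])
      show "((\<lambda>t. K1 * M * t) has_real_derivative K1 * M) (at t)" by (auto intro!: derivative_eq_intros)
      have "K1 * cmod (w t) \<le> K1 * M" by (rule mult_left_mono[OF M]) (use t1 t K1 in auto)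
      then show "cmod (of_real (qf a t / (1+t)) * c1 * w t) \<le> K1 * M" using Wd_bound[OF t1] by linarith
    qed (use x' in auto)
    have "cmod (0 - W x) \<le> K1 * M * 1 - K1 * M * x"
    proof (rule tendsto_le[OF trivial_limit_at_left_real])
      show "((\<lambda>x'. K1 * M * x' - K1 * M * x) \<longlongrightarrow> K1 * M * 1 - K1 * M * x) (at_left 1)"
        by (intro tendsto_intros)
      show "((\<lambda>x'. cmod (W x' - W x)) \<longlongrightarrow> cmod (0 - W x)) (at_left 1)"
        by (intro tendsto_intros Wlim)
      show "\<forall>\<^sub>F x' in at_left 1. cmod (W x' - W x) \<le> K1 * M * x' - K1 * M * x"
        using eventually_at_left_real[OF x(2)] by eventually_elim (use diff in auto)
    qed
    then show ?thesis by (simp add: algebra_simps)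
  qed
  obtain b1 where b1: "m0 \<le> b1" "b1 < 1" "K1 * (1 - b1) \<le> 1/2" "cmod \<mu> * C * (1-b1) powr (1/2) \<le> 1/4"
  proof -
    have l1: "((\<lambda>x. K1 * (1-x)) \<longlongrightarrow> K1 * (1-1)) (at_left 1)" by (intro tendsto_intros)
    have l2: "((\<lambda>x. cmod \<mu> * C * (1-x) powr (1/2)) \<longlongrightarrow> 0) (at_left 1)"
      by (rule tendsto_mult_right_zero[OF lim_s_powr]) simp
    have "eventually (\<lambda>x. K1 * (1-x) < 1/2 \<and> cmod \<mu> * C * (1-x) powr (1/2) < 1/4) (at_left 1)"
      using order_tendstoD(2)[OF l1, of "1/2"] order_tendstoD(2)[OF l2, of "1/4"] by (auto intro: eventually_conj)
    then obtain b where b: "b < 1" "\<And>y. b < y \<Longrightarrow> y < 1 \<Longrightarrow> K1 * (1-y) < 1/2 \<and> cmod \<mu> * C * (1-y) powr (1/2) < 1/4"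
      unfolding eventually_at_left_field by blast
    define b1 where "b1 = (max b m0 + 1) / 2"
    have "b < b1" "b1 < 1" "m0 \<le> b1" using b m0 by (auto simp: b1_def)
    then show ?thesis using that[of b1] b(2)[of b1] by auto
  qed
  have wc: "isCont w s" if "0 < s" "s < 1" for s
    using has_vector_derivative_continuous[OF wd[OF that]] by (simp add: continuous_at)
  have Yc: "isCont Y s" if s: "0 < s" "s < 1" for s
  proof -
    have "isCont v s" using has_vector_derivative_continuous[OF vd[OF s]] by (simp add: continuous_at)
    moreover have "isCont (Bf a) s" by (rule DERIV_isCont[OF Bf_deriv]) (use s a0 in auto)
    ultimately show ?thesis unfolding Y_def[abs_def] by (intro continuous_intros)
  qed
  have wY: "cmod (w b) \<le> 4 * cmod (Y b)" if b: "b1 \<le> b" "b < 1" for b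
  proof -
    have b0': "0 < b" using b1 m0 b by linarith
    define S where "S = {b..<1}"
    have Sne: "S \<noteq> {}" using b by (auto simp: S_def)
    have bw: "bdd_above ((\<lambda>s. cmod (w s)) ` S)" unfolding S_def
      by (rule bdd_tail[OF b(2) _ wl]) (use wc b0' in auto)
    have bY: "bdd_above ((\<lambda>s. cmod (Y s)) ` S)" unfolding S_def
      by (rule bdd_tail[OF b(2) _ Ylim]) (use Yc b0' in auto)
    define Mw where "Mw = (SUP s\<in>S. cmod (w s))"
    define NY where "NY = (SUP s\<in>S. cmod (Y s))"
    have wle: "cmod (w s) \<le> Mw" if "s \<in> S" for s unfolding Mw_def by (rule cSUP_upper[OF that bw])
    have Yle: "cmod (Y s) \<le> NY" if "s \<in> S" for s unfolding NY_def by (rule cSUP_upper[OF that bY])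
    have bS: "b \<in> S" using b by (simp add: S_def)
    have Mw0: "0 \<le> Mw" using wle[OF bS] norm_ge_zero[of "w b"] by linarith
    have NY0: "0 \<le> NY" using Yle[OF bS] norm_ge_zero[of "Y b"] by linarith
    have i: "cmod (w s) \<le> Mw / 2 + NY" if s: "s \<in> S" for s
    proof -
      have s1: "0 < s" "s < 1" "b \<le> s" using s b0' by (auto simp: S_def)
      have "cmod (W s) \<le> K1 * Mw * (1-s)"
        by (rule Wbound[OF s1(1,2)]) (use wle s1 in \<open>auto simp: S_def\<close>)
      also have "\<dots> \<le> Mw / 2"
      proof -
        have "K1 * (1-s) \<le> K1 * (1 - b1)" using s1 b K1 by (intro mult_left_mono) auto
        then have "K1 * (1-s) \<le> 1/2" using b1 by linarith
        then have "Mw * (K1 * (1-s)) \<le> Mw * (1/2)" by (rule mult_left_mono[OF _ Mw0])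
        then show ?thesis by (simp add: algebra_simps)
      qed
      finally have Wb: "cmod (W s) \<le> Mw / 2" .
      have q1: "1 \<le> qf a s" using qf_bounds(1)[of s a] s1 a0 by auto
      have "cmod (w s) \<le> qf a s * cmod (w s)" using q1 by (simp add: mult_le_cancel_right1)
      also have "\<dots> = cmod (W s - Y s)" using q1 by (simp add: W_def norm_mult)
      also have "\<dots> \<le> cmod (W s) + cmod (Y s)" by (rule norm_triangle_ineq4)
      finally show ?thesis using Wb Yle[OF s] by linarith
    qed
    have "Mw \<le> Mw / 2 + NY" unfolding Mw_def[of] by (rule cSUP_least[OF Sne]) (use i in \<open>auto simp: Mw_def\<close>)
    then have MwNY: "Mw \<le> 2 * NY" by linarith
    have ii: "cmod (Y x) \<le> cmod (Y b) + NY / 2" if x: "x \<in> S" for x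
    proof -
      have x1: "b \<le> x" "x < 1" using x by (auto simp: S_def)
      have "cmod (Y x) \<le> Bf a x * cmod (v b) + cmod \<mu> * Mw * C * (1-x) powr (1/2)"
        by (rule Ybound[OF b0' x1]) (use wle in \<open>auto simp: S_def\<close>)
      moreover have "Bf a x * cmod (v b) \<le> Bf a b * cmod (v b)"
        using Bf_antimono[of b x a] x1 a0 by (intro mult_right_mono) auto
      moreover have "Bf a b * cmod (v b) = cmod (Y b)"
        using Bf_pos[of b a] b a0 by (simp add: Y_def norm_mult)
      moreover have "cmod \<mu> * Mw * C * (1-x) powr (1/2) \<le> NY / 2"
      proof -
        have "(1-x) powr (1/2) \<le> (1-b1) powr (1/2)" using x1 b by (intro powr_mono2) auto
        then have "cmod \<mu> * C * (1-x) powr (1/2) \<le> cmod \<mu> * C * (1-b1) powr (1/2)"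
          using K1 by (intro mult_left_mono) auto
        then have "cmod \<mu> * C * (1-x) powr (1/2) \<le> 1/4" using b1 by linarith
        then have "(cmod \<mu> * C * (1-x) powr (1/2)) * Mw \<le> (1/4) * (2 * NY)"
          using Mw0 MwNY by (intro mult_mono) auto
        then show ?thesis by (simp add: algebra_simps)
      qed
      ultimately show ?thesis by linarith
    qed
    have "NY \<le> cmod (Y b) + NY / 2" unfolding NY_def by (rule cSUP_least[OF Sne]) (use ii in \<open>auto simp: NY_def\<close>)
    then have "NY \<le> 2 * cmod (Y b)" by linarith
    then show ?thesis using wle[OF bS] MwNY by linarith
  qed
  have "\<exists>D. \<forall>x. b1 \<le> x \<longrightarrow> x < 1 \<longrightarrow> cmod (v x) \<le> D"
  proof (rule sq_gronwall[of b1 "4 * cmod \<mu> * 2 powr a" v "\<lambda>x. \<mu> * of_real (kw \<epsilon> x) * w x"])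
    fix x assume x: "b1 \<le> x" "x < 1"
    then have x1: "0 < x" "x < 1" using b1 m0 by auto
    show "(v has_vector_derivative \<mu> * of_real (kw \<epsilon> x) * w x) (at x)" by (rule vd[OF x1])
    have kB: "kw \<epsilon> x * Bf a x = qf a x / ((1+a) * (1+x))" using kwB[of x \<epsilon>] x1 eps by (simp add: a_def)
    have qb: "qf a x / ((1+a) * (1+x)) \<le> 2 powr a"
    proof -
      have le: "1 + x \<le> (1+a) * (1+x)" using a0 x1 by (simp add: algebra_simps)
      have "qf a x / ((1+a) * (1+x)) \<le> qf a x / (1+x)"
        by (rule divide_left_mono[OF le]) (use qf_bounds(1)[of x a] x1 a0 in \<open>auto intro!: mult_pos_pos\<close>)
      then show ?thesis using qf_bounds(3)[of x a] x1 a0 by linarith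
    qed
    have kpos: "0 < kw \<epsilon> x" using kw_pos[of x \<epsilon>] x1 by auto
    have "cmod (\<mu> * of_real (kw \<epsilon> x) * w x) = cmod \<mu> * kw \<epsilon> x * cmod (w x)"
      using kpos by (simp add: norm_mult)
    also have "\<dots> \<le> cmod \<mu> * kw \<epsilon> x * (4 * cmod (Y x))"
      using wY[OF x] kpos by (intro mult_left_mono) auto
    also have "\<dots> = 4 * cmod \<mu> * (kw \<epsilon> x * Bf a x) * cmod (v x)"
      using Bf_pos[of x a] x1 a0 by (simp add: Y_def norm_mult)
    also have "\<dots> \<le> 4 * cmod \<mu> * 2 powr a * cmod (v x)"
      unfolding kB using qb by (intro mult_right_mono mult_left_mono) auto
    finally show "cmod (\<mu> * of_real (kw \<epsilon> x) * w x) \<le> 4 * cmod \<mu> * 2 powr a * cmod (v x)" .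
  qed (use b1 in auto)
  then obtain D where D: "\<And>x. b1 \<le> x \<Longrightarrow> x < 1 \<Longrightarrow> cmod (v x) \<le> D" by blast
  have "eventually (\<lambda>x. cmod (v x) \<le> D) (at_left 1)"
    using eventually_at_left_real[of b1 1] b1 D by (auto elim!: eventually_mono)
  then show ?thesis by (rule prod_tendsto_zero[OF wl])
qed



lemma refl_deriv:
  fixes f :: "real \<Rightarrow> complex" and f' :: complex
  assumes "(f has_vector_derivative f') (at (-x))"
  shows "((\<lambda>x. f (-x)) has_vector_derivative - f') (at x)"
proof -
  have u: "((\<lambda>x::real. -x) has_vector_derivative -1) (at x)"
    by (auto intro!: derivative_eq_intros simp: has_real_derivative_iff_has_vector_derivative[symmetric])
  have "((f \<circ> (\<lambda>x. -x)) has_vector_derivative (-1) *\<^sub>R f') (at x)"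
    by (rule vector_diff_chain_at[OF u]) (use assms in simp)
  then show ?thesis by (simp add: o_def)
qed

lemma pw0: "-1 < x \<Longrightarrow> x < 1 \<Longrightarrow> pw 0 x = 1"
  unfolding pw_def by simp

lemma kw0: "kw 0 (-x) = kw 0 x"
  unfolding kw_def pw_def by simp

lemma F_lim_left_zero:
  fixes w v :: "real \<Rightarrow> complex"
  assumes wd: "\<And>x. -1 < x \<Longrightarrow> x < 1 \<Longrightarrow> (w has_vector_derivative v x / of_real (pw 0 x)) (at x)"
   and vd: "\<And>x. -1 < x \<Longrightarrow> x < 1 \<Longrightarrow> (v has_vector_derivative \<mu> * of_real (kw 0 x) * w x) (at x)"
   and wr: "(w \<longlongrightarrow> 0) (at_right (-1))"
  shows "((\<lambda>x. v x * cnj (w x)) \<longlongrightarrow> 0) (at_right (-1))"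
proof -
  define w2 where "w2 x = w (-x)" for x
  define v2 where "v2 x = - v (-x)" for x
  have wd2: "(w2 has_vector_derivative v2 x / of_real (pw 0 x)) (at x)" if "0 < x" "x < 1" for x
  proof -
    have "(w has_vector_derivative v (-x)) (at (-x))" using wd[of "-x"] that pw0[of "-x"] by simp
    then have "(w2 has_vector_derivative - v (-x)) (at x)" unfolding w2_def by (rule refl_deriv)
    then show ?thesis using pw0[of x] that by (simp add: v2_def)
  qed
  have vd2: "(v2 has_vector_derivative \<mu> * of_real (kw 0 x) * w2 x) (at x)" if "0 < x" "x < 1" for x
  proof -
    have "(v has_vector_derivative \<mu> * of_real (kw 0 x) * w2 x) (at (-x))"
      using vd[of "-x"] that kw0[of x] by (simp add: w2_def)
    then have "((\<lambda>x. v (-x)) has_vector_derivative - (\<mu> * of_real (kw 0 x) * w2 x)) (at x)" by (rule refl_deriv)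
    then show ?thesis unfolding v2_def[abs_def] using has_vector_derivative_minus by fastforce
  qed
  have "((w \<circ> (\<lambda>x. -x)) \<longlongrightarrow> 0) (at_left 1)"
    unfolding tendsto_compose_filtermap using wr at_right_minus[of "-1"] by simp
  then have wl2: "(w2 \<longlongrightarrow> 0) (at_left 1)" by (simp add: w2_def[abs_def] o_def)
  have "((\<lambda>x. v2 x * cnj (w2 x)) \<longlongrightarrow> 0) (at_left 1)"
    by (rule F_lim_right1[of 0 w2 v2 \<mu>]) (use wd2 vd2 wl2 in auto)
  then have "((\<lambda>x. - (v2 x * cnj (w2 x))) \<longlongrightarrow> - 0) (at_left 1)" by (rule tendsto_minus)
  then have "(((\<lambda>x. v x * cnj (w x)) \<circ> (\<lambda>x. -x)) \<longlongrightarrow> 0) (at_left 1)"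
    by (simp add: v2_def w2_def o_def)
  then show ?thesis unfolding tendsto_compose_filtermap using at_right_minus[of "-1"] by simp
qed

lemma F_limits:
  fixes w v :: "real \<Rightarrow> complex"
  assumes "0 < x0" "x0 \<le> 1" "0 \<le> \<epsilon>"
   and wd: "\<And>x. -x0 < x \<Longrightarrow> x < x0 \<Longrightarrow> (w has_vector_derivative v x / of_real (pw \<epsilon> x)) (at x)"
   and vd: "\<And>x. -x0 < x \<Longrightarrow> x < x0 \<Longrightarrow> (v has_vector_derivative \<mu> * of_real (kw \<epsilon> x) * w x) (at x)"
   and wl: "(w \<longlongrightarrow> 0) (at_left x0)" and wr: "(w \<longlongrightarrow> 0) (at_right (-x0))"
  shows "((\<lambda>x. v x * cnj (w x)) \<longlongrightarrow> 0) (at_left x0) \<and> ((\<lambda>x. v x * cnj (w x)) \<longlongrightarrow> 0) (at_right (-x0))"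
proof (cases "x0 < 1")
  case True
  then show ?thesis using F_lim_reg[OF assms(1) True assms(3) vd wl wr] by blast
next
  case False
  then have x1: "x0 = 1" using assms(2) by simp
  have r: "((\<lambda>x. v x * cnj (w x)) \<longlongrightarrow> 0) (at_left 1)"
    by (rule F_lim_right1[OF assms(3), of w v \<mu>]) (use wd vd wl x1 in auto)
  have l: "((\<lambda>x. v x * cnj (w x)) \<longlongrightarrow> 0) (at_right (-1))"
  proof (cases "\<epsilon> > 0")
    case True
    show ?thesis by (rule F_lim_left_pos[OF True]) (use vd wr x1 in auto)
  next
    case False
    then have "\<epsilon> = 0" using assms(3) by simp
    then show ?thesis using F_lim_left_zero[of w v \<mu>] wd vd wr x1 by auto
  qed
  show ?thesis using r l x1 by simp
qed


lemma mono_zero: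
  fixes G G' :: "real \<Rightarrow> real"
  assumes "l < r"
    and d: "\<And>x. l < x \<Longrightarrow> x < r \<Longrightarrow> (G has_real_derivative G' x) (at x)"
    and nn: "\<And>x. l < x \<Longrightarrow> x < r \<Longrightarrow> G' x \<ge> 0"
    and lr: "(G \<longlongrightarrow> 0) (at_right l)" and ll: "(G \<longlongrightarrow> 0) (at_left r)"
    and x: "l < x" "x < r"
  shows "G' x = 0"
proof -
  have mono: "G y \<le> G z" if "l < y" "y \<le> z" "z < r" for y z
    proof (rule DERIV_nonneg_imp_nondecreasing[of y z G])
    fix t assume "y \<le> t" "t \<le> z"
    then have "l < t" "t < r" using that by auto
    then show "\<exists>y. (G has_real_derivative y) (at t) \<and> 0 \<le> y" using d nn by blast
  qed (use that in auto)
  have zero: "G y = 0" if y: "l < y" "y < r" for y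
  proof -
    have "0 \<le> G y"
    proof (rule tendsto_upperbound[OF lr _ trivial_limit_at_right_real])
      show "\<forall>\<^sub>F i in at_right l. G i \<le> G y"
        using eventually_at_right_real[OF y(1)] by eventually_elim (use mono y in auto)
    qed
    moreover have "G y \<le> 0"
    proof (rule tendsto_lowerbound[OF ll _ trivial_limit_at_left_real])
      show "\<forall>\<^sub>F i in at_left r. G y \<le> G i"
        using eventually_at_left_real[OF y(2)] by eventually_elim (use mono y in auto)
    qed
    ultimately show ?thesis by simp
  qed
  have "((\<lambda>_. 0) has_real_derivative G' x) (at x)"
    by (rule has_field_derivative_transform_within_open[OF d[OF x], of "{l<..<r}"]) (use x zero in auto)
  moreover have "((\<lambda>_. 0::real) has_real_derivative 0) (at x)" by simp
  ultimately show ?thesis using DERIV_unique by blast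
qed


theorem theorem7:
  fixes x0 \<epsilon> :: real and \<mu> :: complex
  assumes "0 < x0" and "x0 \<le> 1" and "0 \<le> \<epsilon>"
    and "is_eigenvalue x0 \<epsilon> \<mu>" and "\<mu> \<noteq> 0"
  shows "\<mu> \<in> \<real> \<and> Re \<mu> < 0"
proof -
  from assms(4) obtain \<Psi> d\<Psi> where cl: "classical_eigen_solution x0 \<epsilon> \<mu> \<Psi> d\<Psi>"
    and bc: "boundary_cond x0 d\<Psi>" and nc: "\<not> (\<exists>c. \<forall>x\<in>{-x0<..<x0}. \<Psi> x = c)"
    unfolding is_eigenvalue_def by blast
  from cl obtain \<Phi> d\<Phi> where sol: "\<forall>x\<in>{-x0<..<x0}.
        (\<Psi> has_vector_derivative d\<Psi> x) (at x) \<and>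
        ((\<lambda>t. complex_of_real (1 - t\<^sup>2) * d\<Psi> t) has_vector_derivative \<Phi> x) (at x) \<and>
        (\<Phi> has_vector_derivative d\<Phi> x) (at x) \<and>
        d\<Phi> x + complex_of_real (\<epsilon> / (1 - x\<^sup>2)) * \<Phi> x = \<mu> * d\<Psi> x"
    unfolding classical_eigen_solution_def by blast
  define w where "w x = complex_of_real (1 - x\<^sup>2) * d\<Psi> x" for x
  define v where "v x = complex_of_real (pw \<epsilon> x) * \<Phi> x" for x
  define F where "F x = v x * cnj (w x)" for x
  define I where "I = {-x0<..<x0}"
  have inI: "-1 < x" "x < 1" "1 - x\<^sup>2 > 0" if "x \<in> I" for x
    using that assms(2) by (auto simp: I_def abs_square_less_1)
  have Psid: "(\<Psi> has_vector_derivative d\<Psi> x) (at x)" if "x \<in> I" for x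
    using sol that by (auto simp: I_def)
  have wd0: "(w has_vector_derivative \<Phi> x) (at x)" if "x \<in> I" for x
    using sol that unfolding I_def w_def[abs_def] by auto
  have Phid: "(\<Phi> has_vector_derivative d\<Phi> x) (at x)" if "x \<in> I" for x
    using sol that by (auto simp: I_def)
  have eq: "d\<Phi> x + complex_of_real (\<epsilon> / (1 - x\<^sup>2)) * \<Phi> x = \<mu> * d\<Psi> x" if "x \<in> I" for x
    using sol that by (auto simp: I_def)
  have Phiv: "\<Phi> x = v x / of_real (pw \<epsilon> x)" if "x \<in> I" for x
    using pw_pos[OF inI(1,2)[OF that], of \<epsilon>] by (simp add: v_def)
  have wd: "(w has_vector_derivative v x / of_real (pw \<epsilon> x)) (at x)" if "x \<in> I" for x
    using wd0[OF that] Phiv[OF that] by simp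
  have vd: "(v has_vector_derivative \<mu> * of_real (kw \<epsilon> x) * w x) (at x)" if "x \<in> I" for x
  proof -
    have "(v has_vector_derivative of_real (pw \<epsilon> x) * d\<Phi> x + of_real (\<epsilon> * pw \<epsilon> x / (1 - x\<^sup>2)) * \<Phi> x) (at x)"
      unfolding v_def[abs_def]
      by (rule has_vector_derivative_mult[OF has_vector_derivative_of_real[OF pw_deriv[OF inI(1,2)[OF that]]] Phid[OF that]])
    moreover have "of_real (pw \<epsilon> x) * d\<Phi> x + of_real (\<epsilon> * pw \<epsilon> x / (1 - x\<^sup>2)) * \<Phi> x
        = of_real (pw \<epsilon> x) * (d\<Phi> x + complex_of_real (\<epsilon> / (1 - x\<^sup>2)) * \<Phi> x)"
      by (simp add: algebra_simps)
    moreover have "\<dots> = \<mu> * of_real (kw \<epsilon> x) * w x"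
    proof -
      have "of_real (kw \<epsilon> x) * of_real (1 - x\<^sup>2) = (of_real (pw \<epsilon> x) :: complex)"
        unfolding of_real_mult[symmetric] using inI(3)[OF that] by (simp add: kw_def)
      then show ?thesis unfolding eq[OF that] w_def by (metis mult.assoc mult.commute)
    qed
    ultimately show ?thesis by simp
  qed
  have wl: "(w \<longlongrightarrow> 0) (at_left x0) \<and> (w \<longlongrightarrow> 0) (at_right (-x0))"
  proof (cases "x0 < 1")
    case True
    then have d: "(d\<Psi> \<longlongrightarrow> 0) (at_left x0)" "(d\<Psi> \<longlongrightarrow> 0) (at_right (-x0))"
      using bc unfolding boundary_cond_def by auto
    have "(w \<longlongrightarrow> complex_of_real (1 - x0\<^sup>2) * 0) (at_left x0)"
      unfolding w_def[abs_def] by (intro tendsto_intros d)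
    moreover have "(w \<longlongrightarrow> complex_of_real (1 - (-x0)\<^sup>2) * 0) (at_right (-x0))"
      unfolding w_def[abs_def] by (intro tendsto_intros d)
    ultimately show ?thesis by simp
  next
    case False
    then have "x0 = 1" using assms(2) by simp
    then show ?thesis using bc unfolding boundary_cond_def w_def[abs_def] by auto
  qed
  have Flim: "(F \<longlongrightarrow> 0) (at_left x0) \<and> (F \<longlongrightarrow> 0) (at_right (-x0))"
    unfolding F_def[abs_def]
    by (rule F_limits[OF assms(1-3)]) (use wd vd wl in \<open>auto simp: I_def\<close>)
  define P where "P x = pw \<epsilon> x * (cmod (\<Phi> x))\<^sup>2" for x
  define Q where "Q x = kw \<epsilon> x * (cmod (w x))\<^sup>2" for x
  have Fd: "(F has_vector_derivative of_real (P x) + \<mu> * of_real (Q x)) (at x)" if "x \<in> I" for x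
  proof -
    have "(F has_vector_derivative v x * cnj (\<Phi> x) + \<mu> * of_real (kw \<epsilon> x) * w x * cnj (w x)) (at x)"
      unfolding F_def[abs_def]
      by (rule has_vector_derivative_mult[OF vd[OF that] has_vector_derivative_cnj[OF wd0[OF that]], THEN has_vector_derivative_eq_rhs]) simp
    moreover have "v x * cnj (\<Phi> x) = of_real (P x)"
      unfolding v_def P_def of_real_mult mult.assoc complex_norm_square by simp
    moreover have "\<mu> * of_real (kw \<epsilon> x) * w x * cnj (w x) = \<mu> * of_real (Q x)"
      unfolding Q_def of_real_mult mult.assoc complex_norm_square by simp
    ultimately show ?thesis by simp
  qed
  have Pnn: "P x \<ge> 0" if "x \<in> I" for x
    using pw_pos[OF inI(1,2)[OF that], of \<epsilon>] by (simp add: P_def)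
  have Qnn: "Q x \<ge> 0" if "x \<in> I" for x
    using kw_pos[OF inI(1,2)[OF that], of \<epsilon>] by (simp add: Q_def)
  have key: False if G: "\<And>x. x \<in> I \<Longrightarrow> (G has_real_derivative G' x) (at x)"
      and Gq: "\<And>x. x \<in> I \<Longrightarrow> G' x \<ge> \<delta> * Q x" and "\<delta> > 0"
      and Gl: "(G \<longlongrightarrow> 0) (at_right (-x0))" "(G \<longlongrightarrow> 0) (at_left x0)" for G G' \<delta>
  proof -
    have "G' x = 0" if "x \<in> I" for x
      by (rule mono_zero[of "-x0" x0 G G']) (use that G Gq Qnn \<open>\<delta>>0\<close> Gl assms(1) in \<open>auto simp: I_def intro!: order_trans[OF _ Gq] mult_nonneg_nonneg\<close>)
    then have "Q x = 0" if "x \<in> I" for x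
      using Gq[OF that] Qnn[OF that] \<open>\<delta>>0\<close> that by (metis mult_le_0_iff order_antisym_conv not_le)
    then have "d\<Psi> x = 0" if "x \<in> I" for x
    proof -
      have "kw \<epsilon> x * (cmod (w x))\<^sup>2 = 0" using \<open>\<And>x. x \<in> I \<Longrightarrow> Q x = 0\<close>[OF that] by (simp add: Q_def)
      then have "w x = 0" using kw_pos[OF inI(1,2)[OF that], of \<epsilon>] by simp
      moreover have "complex_of_real (1 - x\<^sup>2) \<noteq> 0" using inI(3)[OF that] by (simp only: of_real_eq_0_iff)
      ultimately show ?thesis unfolding w_def by simp
    qed
    then have "(\<Psi> has_derivative (\<lambda>h. 0)) (at x within I)" if "x \<in> I" for x
      using Psid[OF that] that by (auto simp: has_vector_derivative_def intro: has_derivative_at_withinI)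
    then obtain c where "\<forall>x\<in>I. \<Psi> x = c"
      using has_derivative_zero_constant[of I \<Psi>] by (auto simp: I_def)
    with nc show False by (auto simp: I_def)
  qed
  have ReF: "((\<lambda>x. Re (F x)) has_real_derivative P x + Re \<mu> * Q x) (at x)" if "x \<in> I" for x
    using has_field_derivative_Re[OF Fd[OF that]] by simp
  have ImF: "((\<lambda>x. Im (F x)) has_real_derivative Im \<mu> * Q x) (at x)" if "x \<in> I" for x
    using has_field_derivative_Im[OF Fd[OF that]] by simp
  have lims: "((\<lambda>x. Re (F x)) \<longlongrightarrow> 0) (at_right (-x0))" "((\<lambda>x. Re (F x)) \<longlongrightarrow> 0) (at_left x0)"
     "((\<lambda>x. Im (F x)) \<longlongrightarrow> 0) (at_right (-x0))" "((\<lambda>x. Im (F x)) \<longlongrightarrow> 0) (at_left x0)"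
    using Flim tendsto_Re[of F 0] tendsto_Im[of F 0] by auto
  have im0: "Im \<mu> = 0"
  proof (rule ccontr)
    assume ne: "Im \<mu> \<noteq> 0"
    show False
    proof (cases "Im \<mu> > 0")
      case True
      show False by (rule key[OF ImF order_refl True lims(3,4)])
    next
      case False
      then have "- Im \<mu> > 0" using ne by simp
      moreover have "((\<lambda>x. - Im (F x)) has_real_derivative - Im \<mu> * Q x) (at x)" if "x \<in> I" for x
        using DERIV_minus[OF ImF[OF that]] by simp
      moreover have "((\<lambda>x. - Im (F x)) \<longlongrightarrow> 0) (at_right (-x0))" "((\<lambda>x. - Im (F x)) \<longlongrightarrow> 0) (at_left x0)"
        using tendsto_minus[OF lims(3)] tendsto_minus[OF lims(4)] by auto
      ultimately show False using key[of "\<lambda>x. - Im (F x)" "\<lambda>x. - Im \<mu> * Q x" "- Im \<mu>"] by blast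
    qed
  qed
  have re: "Re \<mu> < 0"
  proof (rule ccontr)
    assume "\<not> Re \<mu> < 0"
    then have "Re \<mu> > 0" using im0 assms(5) complex_eqI[of \<mu> 0] by force
    show False by (rule key[OF ReF _ \<open>Re \<mu> > 0\<close> lims(1,2)]) (use Pnn in auto)
  qed
  show ?thesis using im0 re by (simp add: complex_is_Real_iff)
qed


end
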